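(* Let $\mathcal{H}_1,\mathcal{H}_2$ be finite-dimensional Hilbert spaces, $m$ a positive integer, and $\mathcal{O}^{(\mathrm{CP})}_{\mathrm{F}}(\mathcal{H}_1\to\mathcal{H}_2)\subseteq\mathcal{O}^{(\mathrm{CP})}(\mathcal{H}_1\to\mathcal{H}_2)$ a set of free completely positive trace-nonincreasing maps. Let $(\mathcal{E}_i)_{i=0}^{m-1}\in\mathcal{O}^{(m)}(\mathcal{H}_1\to\mathcal{H}_2)$ be a quantum instrument. Let $\mathcal{H}_3$ be an $m$-dimensional Hilbert space with orthonormal basis $\{|i\rangle\}_{i=0}^{m-1}$, and for an instrument $(\mathcal{E}_i)_i$ define the channel $\Lambda_{(\mathcal{E}_i)_i}\in\mathcal{O}(\mathcal{H}_1\to\mathcal{H}_3\otimes\mathcal{H}_2)$ by $\Lambda_{(\mathcal{E}_i)_i}(\rho)=\sum_{i=0}^{m-1}|i\rangle\langle i|\otimes\mathcal{E}_i(\rho)$. Let \[\mathcal{O}_{\mathrm{F}}=\Big\{\Lambda_{(\mathcal{E}'_i)_i}:\ \mathcal{E}'_i\in\mathcal{O}^{(\mathrm{CP})}_{\mathrm{F}}(\mathcal{H}_1\to\mathcal{H}_2)\ \forall i,\ \textstyle\sum_{i=0}^{m-1}\mathcal{E}'_i\in\mathcal{O}(\mathcal{H}_1\to\mathcal{H}_2)\Big\}.\] Then $R_{\mathcal{O}^{(\mathrm{CP})}_{\mathrm{F}}}((\mathcal{E}_i)_i)=R_{\mathcal{O}_{\mathrm{F}}}(\Lambda_{(\mathc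al{E}_i)_i})$.
   Context: $\mathcal{O}(\mathcal{H}\to\mathcal{K})$ denotes quantum channels (CPTP maps) and $\mathcal{O}^{(\mathrm{CP})}(\mathcal{H}\to\mathcal{K})$ completely positive trace-nonincreasing maps. A quantum instrument with $m$ elements is a family $(\mathcal{E}_i)_{i=0}^{m-1}$ of maps in $\mathcal{O}^{(\mathrm{CP})}(\mathcal{H}_1\to\mathcal{H}_2)$ with $\sum_i\mathcal{E}_i\in\mathcal{O}(\mathcal{H}_1\to\mathcal{H}_2)$; the set of these is $\mathcal{O}^{(m)}(\mathcal{H}_1\to\mathcal{H}_2)$. Generalized robustness of an instrument: $R_{\mathcal{O}^{(\mathrm{CP})}_{\mathrm{F}}}((\mathcal{E}_i)_i)=\min\{s\ge0:\exists(\mathcal{G}_i)_i\in\mathcal{O}^{(m)}(\mathcal{H}_1\to\mathcal{H}_2),\ \frac{\mathcal{E}_i+s\mathcal{G}_i}{1+s}\in\mathcal{O}^{(\mathrm{CP})}_{\mathrm{F}}(\mathcal{H}_1\to\mathcal{H}_2)\ \forall i\}$. Generalized robustness of a channel $\Lambda$ with respect to a set $\mathcal{G}$ of channels from $\mathcal{H}_1$ to $\mathcal{H}_3\otimes\mathcal{H}_2$: $R_{\mathcal{G}}(\Lambda)=\min\{s\ge0:\exists\Theta\in\mathcal{O}(\mathcal{H}_1\to\mathcal{H}_3\otimes\mathcal{H}_2),\ \frac{\Lambda+s\Theta}{1+s}\in\mathcal{G}\}$. *)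

theory Defs
  imports Complex_Main "HOL-Library.Extended_Real"
begin

text \<open>Operators on a finite-dimensional Hilbert space with orthonormal basis indexed by
  the finite type 'a are represented as matrices 'a \<Rightarrow> 'a \<Rightarrow> complex.\<close>

type_synonym 'a cmat = "'a \<Rightarrow> 'a \<Rightarrow> complex"

definition psd_on :: "'a set \<Rightarrow> 'a cmat \<Rightarrow> bool" where
  "psd_on S M \<longleftrightarrow> (\<forall>v :: 'a \<Rightarrow> complex.
     (\<Sum>x\<in>S. \<Sum>y\<in>S. cnj (v x) * M x y * v y) \<in> \<real> \<and>
     Re (\<Sum>x\<in>S. \<Sum>y\<in>S. cnj (v x) * M x y * v y) \<ge> 0)"

definition psd :: "('a::finite) cmat \<Rightarrow> bool" where
  "psd M \<longleftrightarrow> psd_on UNIV M"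

definition mtrace :: "('a::finite) cmat \<Rightarrow> complex" where
  "mtrace M = (\<Sum>a\<in>UNIV. M a a)"

definition lin_map :: "('a cmat \<Rightarrow> 'b cmat) \<Rightarrow> bool" where
  "lin_map \<Phi> \<longleftrightarrow>
     (\<forall>A B. \<Phi> (\<lambda>i j. A i j + B i j) = (\<lambda>i j. \<Phi> A i j + \<Phi> B i j)) \<and>
     (\<forall>c A. \<Phi> (\<lambda>i j. c * A i j) = (\<lambda>i j. c * \<Phi> A i j))"

text \<open>Ampliation id_n \<otimes> \<Phi>, the ancilla having basis {0..<n}.\<close>
definition amp :: "nat \<Rightarrow> ('a cmat \<Rightarrow> 'b cmat) \<Rightarrow> (nat \<times> 'a) cmat \<Rightarrow> (nat \<times> 'b) cmat" where
  "amp n \<Phi> X = (\<lambda>(k, b) (l, b'). if k < n \<and> l < n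
       then \<Phi> (\<lambda>a a'. X (k, a) (l, a')) b b' else 0)"

definition completely_positive :: "(('a::finite) cmat \<Rightarrow> ('b::finite) cmat) \<Rightarrow> bool" where
  "completely_positive \<Phi> \<longleftrightarrow> lin_map \<Phi> \<and>
     (\<forall>n X. psd_on ({..<n} \<times> UNIV) X \<longrightarrow> psd_on ({..<n} \<times> UNIV) (amp n \<Phi> X))"

definition cptn :: "(('a::finite) cmat \<Rightarrow> ('b::finite) cmat) \<Rightarrow> bool" where
  "cptn \<Phi> \<longleftrightarrow> completely_positive \<Phi> \<and>
     (\<forall>\<rho>. psd \<rho> \<longrightarrow> Re (mtrace (\<Phi> \<rho>)) \<le> Re (mtrace \<rho>))"

definition channel :: "(('a::finite) cmat \<Rightarrow> ('b::finite) cmat) \<Rightarrow> bool" where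
  "channel \<Phi> \<longleftrightarrow> completely_positive \<Phi> \<and> (\<forall>\<rho>. mtrace (\<Phi> \<rho>) = mtrace \<rho>)"

definition sum_maps :: "('c::finite \<Rightarrow> 'a cmat \<Rightarrow> 'b cmat) \<Rightarrow> 'a cmat \<Rightarrow> 'b cmat" where
  "sum_maps E = (\<lambda>\<rho> i j. \<Sum>k\<in>UNIV. E k \<rho> i j)"

text \<open>O^(m)(H1 -> H2): instruments with outcomes indexed by the finite type 'c, m = CARD('c).\<close>
definition instrument :: "('c::finite \<Rightarrow> ('a::finite) cmat \<Rightarrow> ('b::finite) cmat) \<Rightarrow> bool" where
  "instrument E \<longleftrightarrow> (\<forall>i. cptn (E i)) \<and> channel (sum_maps E)"

definition mix :: "real \<Rightarrow> ('a cmat \<Rightarrow> 'b cmat) \<Rightarrow> ('a cmat \<Rightarrow> 'b cmat) \<Rightarrow> 'a cmat \<Rightarrow> 'b cmat" where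
  "mix s A B = (\<lambda>\<rho> i j. (A \<rho> i j + complex_of_real s * B \<rho> i j) / complex_of_real (1 + s))"

text \<open>Generalized robustness of an instrument w.r.t. a set F of free CPTN maps
  (infimum in the extended reals; +\<infinity> if no s works).\<close>
definition rob_instr :: "(('a::finite) cmat \<Rightarrow> ('b::finite) cmat) set \<Rightarrow>
    ('c::finite \<Rightarrow> 'a cmat \<Rightarrow> 'b cmat) \<Rightarrow> ereal" where
  "rob_instr F E = Inf (ereal ` {s. s \<ge> 0 \<and>
     (\<exists>G :: 'c \<Rightarrow> 'a cmat \<Rightarrow> 'b cmat. instrument G \<and> (\<forall>i. mix s (E i) (G i) \<in> F))})"

definition rob_chan :: "(('a::finite) cmat \<Rightarrow> ('d::finite) cmat) set \<Rightarrow>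
    ('a cmat \<Rightarrow> 'd cmat) \<Rightarrow> ereal" where
  "rob_chan \<G> \<Lambda> = Inf (ereal ` {s. s \<ge> 0 \<and>
     (\<exists>\<Theta> :: 'a cmat \<Rightarrow> 'd cmat. channel \<Theta> \<and> mix s \<Lambda> \<Theta> \<in> \<G>)})"

text \<open>\<Lambda>_E(\<rho>) = \<Sum>_i |i><i| \<otimes> E_i(\<rho>), on H3 \<otimes> H2 with basis 'c \<times> 'b.\<close>
definition instr_channel :: "('c::finite \<Rightarrow> ('a::finite) cmat \<Rightarrow> ('b::finite) cmat) \<Rightarrow>
    'a cmat \<Rightarrow> ('c \<times> 'b) cmat" where
  "instr_channel E = (\<lambda>\<rho> (i, b) (j, b'). if i = j then E i \<rho> b b' else 0)"

definition free_instr_channels :: "(('a::finite) cmat \<Rightarrow> ('b::finite) cmat) set \<Rightarrow>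
    ('a cmat \<Rightarrow> ('c::finite \<times> 'b) cmat) set" where
  "free_instr_channels F = {instr_channel E' | E'.
     (\<forall>i. E' i \<in> F) \<and> channel (sum_maps E')}"

end

theory Submission
  imports Defs
begin

definition qf :: "'a set \<Rightarrow> 'a cmat \<Rightarrow> ('a \<Rightarrow> complex) \<Rightarrow> complex" where
  "qf S M v = (\<Sum>x\<in>S. \<Sum>y\<in>S. cnj (v x) * M x y * v y)"

lemma psd_on_qf: "psd_on S M \<longleftrightarrow> (\<forall>v. qf S M v \<in> \<real> \<and> Re (qf S M v) \<ge> 0)"
  unfolding psd_on_def qf_def by simp

lemma qf_restrict:
  assumes "finite S" "T \<subseteq> S"
    and "\<And>x y. x \<in> S \<Longrightarrow> y \<in> S \<Longrightarrow> x \<notin> T \<or> y \<notin> T \<Longrightarrow> cnj (v x) * M x y * v y = 0"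
  shows "qf S M v = qf T M v"
proof -
  have fT: "finite T" using assms finite_subset by blast
  have "qf S M v = (\<Sum>x\<in>S. \<Sum>y\<in>T. cnj (v x) * M x y * v y)"
    unfolding qf_def
  proof (rule sum.cong[OF refl])
    fix x assume "x \<in> S"
    show "(\<Sum>y\<in>S. cnj (v x) * M x y * v y) = (\<Sum>y\<in>T. cnj (v x) * M x y * v y)"
      by (rule sum.mono_neutral_right) (use assms \<open>x \<in> S\<close> in auto)
  qed
  also have "\<dots> = (\<Sum>x\<in>T. \<Sum>y\<in>T. cnj (v x) * M x y * v y)"
    by (rule sum.mono_neutral_right) (use assms fT in \<open>auto intro!: sum.neutral\<close>)
  finally show ?thesis unfolding qf_def .
qed

lemma qf_reindex:
  assumes "inj_on h T"
  shows "qf (h ` T) M v = qf T (\<lambda>x y. M (h x) (h y)) (v \<circ> h)"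
  unfolding qf_def using assms
  by (simp add: sum.reindex)

lemma amp_apply: "amp n \<Phi> X (k, b) (l, b') =
   (if k < n \<and> l < n then \<Phi> (\<lambda>a a'. X (k, a) (l, a')) b b' else 0)"
  by (simp add: amp_def)

lemma fin_S: "finite ({..<(n::nat)} \<times> (UNIV :: ('a::finite) set))"
  by (intro finite_cartesian_product) auto

lemma cp_zero: "completely_positive (\<lambda>(\<rho>::('a::finite) cmat) (i::'b::finite) j. 0)"
proof -
  have "amp n (\<lambda>(\<rho>::'a cmat) (i::'b) j. 0) X = (\<lambda>x y. 0)" for n and X :: "(nat \<times> 'a) cmat"
    by (auto simp: amp_def fun_eq_iff)
  then show ?thesis
    unfolding completely_positive_def lin_map_def psd_on_qf qf_def by simp
qed

lemma cp_add:
  assumes "completely_positive (A :: ('a::finite) cmat \<Rightarrow> ('b::finite) cmat)" "completely_positive B"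
  shows "completely_positive (\<lambda>\<rho> i j. A \<rho> i j + B \<rho> i j)"
proof -
  have la: "lin_map A" and lb: "lin_map B" using assms unfolding completely_positive_def by auto
  have lin: "lin_map (\<lambda>\<rho> i j. A \<rho> i j + B \<rho> i j)"
    using la lb unfolding lin_map_def by (simp add: algebra_simps)
  have amp: "amp n (\<lambda>\<rho> i j. A \<rho> i j + B \<rho> i j) X = (\<lambda>x y. amp n A X x y + amp n B X x y)" for n :: nat and X
    by (auto simp: amp_def fun_eq_iff)
  have qfa: "qf S (\<lambda>x y. M x y + N x y) v = qf S M v + qf S N v" for S M N v
    unfolding qf_def by (simp add: algebra_simps sum.distrib)
  show ?thesis unfolding completely_positive_def
  proof (intro conjI lin allI impI)
    fix n :: nat and X :: "(nat \<times> 'a) cmat" assume X: "psd_on ({..<n} \<times> UNIV) X"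
    have "psd_on ({..<n} \<times> UNIV) (amp n A X)" "psd_on ({..<n} \<times> UNIV) (amp n B X)"
      using assms X unfolding completely_positive_def by auto
    then show "psd_on ({..<n} \<times> UNIV) (amp n (\<lambda>\<rho> i j. A \<rho> i j + B \<rho> i j) X)"
      unfolding psd_on_qf amp qfa by (auto intro: Reals_add)
  qed
qed

lemma cp_scale:
  assumes "completely_positive (A :: ('a::finite) cmat \<Rightarrow> ('b::finite) cmat)" "a \<ge> 0"
  shows "completely_positive (\<lambda>\<rho> i j. complex_of_real a * A \<rho> i j)"
proof -
  have la: "lin_map A" using assms unfolding completely_positive_def by auto
  have lin: "lin_map (\<lambda>\<rho> i j. complex_of_real a * A \<rho> i j)"
    using la unfolding lin_map_def by (simp add: algebra_simps)
  have amp: "amp n (\<lambda>\<rho> i j. complex_of_real a * A \<rho> i j) X = (\<lambda>x y. complex_of_real a * amp n A X x y)" for n :: nat and X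
    by (auto simp: amp_def fun_eq_iff)
  have qfa: "qf S (\<lambda>x y. complex_of_real a * M x y) v = complex_of_real a * qf S M v" for S M v
    unfolding qf_def by (simp add: algebra_simps sum_distrib_left)
  show ?thesis unfolding completely_positive_def
  proof (intro conjI lin allI impI)
    fix n :: nat and X :: "(nat \<times> 'a) cmat" assume X: "psd_on ({..<n} \<times> UNIV) X"
    have "psd_on ({..<n} \<times> UNIV) (amp n A X)"
      using assms X unfolding completely_positive_def by auto
    then show "psd_on ({..<n} \<times> UNIV) (amp n (\<lambda>\<rho> i j. complex_of_real a * A \<rho> i j) X)"
      unfolding psd_on_qf amp qfa using assms(2) by (auto intro: Reals_mult)
  qed
qed

lemma cp_sum_set:
  assumes "\<And>c. completely_positive (\<Phi> c :: ('a::finite) cmat \<Rightarrow> ('b::finite) cmat)" "finite S"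
  shows "completely_positive (\<lambda>\<rho> i j. \<Sum>c\<in>S. \<Phi> c \<rho> i j)"
  using assms(2)
proof (induction S rule: finite_induct)
  case empty
  then show ?case using cp_zero by simp
next
  case (insert x F)
  then show ?case using cp_add[OF assms(1)[of x] insert.IH] by simp
qed

lemma cp_sum_maps:
  assumes "\<And>c. completely_positive (\<Phi> c :: ('a::finite) cmat \<Rightarrow> ('b::finite) cmat)"
  shows "completely_positive (sum_maps (\<Phi> :: ('c::finite) \<Rightarrow> _))"
  unfolding sum_maps_def by (rule cp_sum_set[OF assms]) simp

lemma mix_alt: "s \<ge> 0 \<Longrightarrow> mix s A B = (\<lambda>\<rho> i j. complex_of_real (1/(1+s)) * A \<rho> i j
   + complex_of_real (s/(1+s)) * B \<rho> i j)"
  unfolding mix_def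
  by (auto simp: fun_eq_iff add_divide_distrib)

lemma cp_mix:
  assumes "completely_positive A" "completely_positive B" "s \<ge> 0"
  shows "completely_positive (mix s A B)"
  unfolding mix_alt[OF assms(3)]
  by (rule cp_add; rule cp_scale) (use assms in auto)


lemma cp_compress:
  assumes "completely_positive (\<Phi> :: ('a::finite) cmat \<Rightarrow> ('d::finite) cmat)" "inj (h :: 'b::finite \<Rightarrow> 'd)"
  shows "completely_positive (\<lambda>\<rho> b b'. \<Phi> \<rho> (h b) (h b'))"
proof -
  have l: "lin_map \<Phi>" using assms unfolding completely_positive_def by auto
  have lin: "lin_map (\<lambda>\<rho> b b'. \<Phi> \<rho> (h b) (h b'))"
    using l unfolding lin_map_def by simp
  show ?thesis unfolding completely_positive_def
  proof (intro conjI lin allI impI)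
    fix n :: nat and X :: "(nat \<times> 'a) cmat" assume X: "psd_on ({..<n} \<times> UNIV) X"
    have P: "psd_on ({..<n} \<times> UNIV) (amp n \<Phi> X)"
      using assms X unfolding completely_positive_def by auto
    show "psd_on ({..<n} \<times> UNIV) (amp n (\<lambda>\<rho> b b'. \<Phi> \<rho> (h b) (h b')) X)"
      unfolding psd_on_qf
    proof
      fix v :: "nat \<times> 'b \<Rightarrow> complex"
      define g :: "nat \<times> 'b \<Rightarrow> nat \<times> 'd" where "g = (\<lambda>(k,b). (k, h b))"
      define w :: "nat \<times> 'd \<Rightarrow> complex" where
        "w = (\<lambda>(k,d). if d \<in> range h then v (k, inv h d) else 0)"
      have ig: "inj_on g ({..<n} \<times> UNIV)" using assms(2) unfolding g_def inj_on_def inj_def by auto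
      have wg: "w \<circ> g = v" using assms(2) by (auto simp: fun_eq_iff w_def g_def)
      have Mg: "(\<lambda>x y. amp n \<Phi> X (g x) (g y)) = amp n (\<lambda>\<rho> b b'. \<Phi> \<rho> (h b) (h b')) X"
        by (auto simp: fun_eq_iff g_def amp_apply)
      have "qf ({..<n} \<times> UNIV) (amp n (\<lambda>\<rho> b b'. \<Phi> \<rho> (h b) (h b')) X) v
          = qf (g ` ({..<n} \<times> UNIV)) (amp n \<Phi> X) w"
        using qf_reindex[OF ig, of "amp n \<Phi> X" w] Mg wg by simp
      also have "\<dots> = qf ({..<n} \<times> UNIV) (amp n \<Phi> X) w"
      proof (rule qf_restrict[symmetric, OF fin_S])
        show "g ` ({..<n} \<times> UNIV) \<subseteq> {..<n} \<times> UNIV" by (auto simp: g_def)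
        have "w x = 0" if "x \<in> {..<n} \<times> UNIV" "x \<notin> g ` ({..<n} \<times> UNIV)" for x
        proof -
          obtain k d where x: "x = (k, d)" by (cases x)
          have "d \<notin> range h"
          proof
            assume "d \<in> range h" then obtain b where "d = h b" by auto
            then have "x = g (k, b)" using x by (simp add: g_def)
            then show False using that x by auto
          qed
          then show ?thesis using x by (simp add: w_def)
        qed
        then show "\<And>x y. x \<in> {..<n} \<times> UNIV \<Longrightarrow> y \<in> {..<n} \<times> UNIV \<Longrightarrow>
            x \<notin> g ` ({..<n} \<times> UNIV) \<or> y \<notin> g ` ({..<n} \<times> UNIV) \<Longrightarrow>
            cnj (w x) * amp n \<Phi> X x y * w y = 0" by auto
      qed
      finally show "qf ({..<n} \<times> UNIV) (amp n (\<lambda>\<rho> b b'. \<Phi> \<rho> (h b) (h b')) X) v \<in> \<real> \<and>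
          0 \<le> Re (qf ({..<n} \<times> UNIV) (amp n (\<lambda>\<rho> b b'. \<Phi> \<rho> (h b) (h b')) X) v)"
        using P unfolding psd_on_qf by metis
    qed
  qed
qed

lemma cp_block:
  assumes "completely_positive (\<Psi> :: ('a::finite) cmat \<Rightarrow> ('b::finite) cmat)"
  shows "completely_positive (\<lambda>\<rho> (x::('c::finite \<times> 'b)) (y::'c \<times> 'b).
     if fst x = c \<and> fst y = c then \<Psi> \<rho> (snd x) (snd y) else 0)"
    (is "completely_positive ?B")
proof -
  have l: "lin_map \<Psi>" using assms unfolding completely_positive_def by auto
  have lin: "lin_map ?B"
    using l unfolding lin_map_def by (auto simp: fun_eq_iff)
  show ?thesis unfolding completely_positive_def
  proof (intro conjI lin allI impI)
    fix n :: nat and X :: "(nat \<times> 'a) cmat" assume X: "psd_on ({..<n} \<times> UNIV) X"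
    have P: "psd_on ({..<n} \<times> UNIV) (amp n \<Psi> X)"
      using assms X unfolding completely_positive_def by auto
    show "psd_on ({..<n} \<times> UNIV) (amp n ?B X)"
      unfolding psd_on_qf
    proof
      fix v :: "nat \<times> ('c \<times> 'b) \<Rightarrow> complex"
      define g :: "nat \<times> 'b \<Rightarrow> nat \<times> ('c \<times> 'b)" where "g = (\<lambda>(k,b). (k, (c, b)))"
      have ig: "inj_on g ({..<n} \<times> UNIV)" unfolding g_def inj_on_def by auto
      have Mg: "(\<lambda>x y. amp n ?B X (g x) (g y)) = amp n \<Psi> X"
        by (auto simp: fun_eq_iff g_def amp_apply)
      have "qf ({..<n} \<times> UNIV) (amp n ?B X) v = qf (g ` ({..<n} \<times> UNIV)) (amp n ?B X) v"
      proof (rule qf_restrict[OF fin_S])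
        show "g ` ({..<n} \<times> UNIV) \<subseteq> {..<n} \<times> UNIV" by (auto simp: g_def)
        have "amp n ?B X x y = 0" if "x \<in> {..<n} \<times> UNIV" "y \<in> {..<n} \<times> UNIV"
          "x \<notin> g ` ({..<n} \<times> UNIV) \<or> y \<notin> g ` ({..<n} \<times> UNIV)" for x y
        proof -
          obtain k i b where x: "x = (k, (i, b))" by (metis prod.collapse)
          obtain l j b' where y: "y = (l, (j, b'))" by (metis prod.collapse)
          have "i \<noteq> c \<or> j \<noteq> c"
          proof (rule ccontr)
            assume "\<not> (i \<noteq> c \<or> j \<noteq> c)"
            then have "x = g (k, b)" "y = g (l, b')" using x y by (auto simp: g_def)
            moreover have "k < n" "l < n" using that(1,2) x y by auto
            ultimately have "x \<in> g ` ({..<n} \<times> UNIV)" "y \<in> g ` ({..<n} \<times> UNIV)" by auto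
            then show False using that(3) by auto
          qed
          then show ?thesis using x y by (auto simp: amp_apply)
        qed
        then show "\<And>x y. x \<in> {..<n} \<times> UNIV \<Longrightarrow> y \<in> {..<n} \<times> UNIV \<Longrightarrow>
            x \<notin> g ` ({..<n} \<times> UNIV) \<or> y \<notin> g ` ({..<n} \<times> UNIV) \<Longrightarrow>
            cnj (v x) * amp n ?B X x y * v y = 0" by auto
      qed
      also have "\<dots> = qf ({..<n} \<times> UNIV) (amp n \<Psi> X) (v \<circ> g)"
        using qf_reindex[OF ig, of "amp n ?B X" v] Mg by simp
      finally show "qf ({..<n} \<times> UNIV) (amp n ?B X) v \<in> \<real> \<and>
          0 \<le> Re (qf ({..<n} \<times> UNIV) (amp n ?B X) v)"
        using P unfolding psd_on_qf by metis
    qed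
  qed
qed

lemma cp_psd:
  assumes "completely_positive (\<Phi> :: ('a::finite) cmat \<Rightarrow> ('b::finite) cmat)" "psd \<rho>"
  shows "psd (\<Phi> \<rho>)"
proof -
  define X :: "(nat \<times> 'a) cmat" where "X = (\<lambda>x y. \<rho> (snd x) (snd y))"
  define g :: "'a \<Rightarrow> nat \<times> 'a" where "g = (\<lambda>a. (0, a))"
  have ig: "inj_on g UNIV" unfolding g_def inj_on_def by auto
  have S1: "{..<1} \<times> UNIV = g ` UNIV" unfolding g_def by auto
  have "psd_on ({..<1} \<times> UNIV) X"
    unfolding psd_on_qf
  proof
    fix v
    have "qf ({..<1} \<times> UNIV) X v = qf UNIV \<rho> (v \<circ> g)"
      unfolding S1 qf_reindex[OF ig] by (simp add: X_def g_def)
    then show "qf ({..<1} \<times> UNIV) X v \<in> \<real> \<and> 0 \<le> Re (qf ({..<1} \<times> UNIV) X v)"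
      using assms(2) unfolding psd_def psd_on_qf by metis
  qed
  then have P: "psd_on ({..<1} \<times> UNIV) (amp 1 \<Phi> X)"
    using assms(1) unfolding completely_positive_def by auto
  have ig2: "inj_on (\<lambda>b::'b. (0::nat, b)) UNIV" unfolding inj_on_def by auto
  have S2: "{..<1} \<times> UNIV = (\<lambda>b::'b. (0::nat, b)) ` UNIV" by auto
  have M: "(\<lambda>x y. amp 1 \<Phi> X (0, x) (0, y)) = \<Phi> \<rho>"
    by (simp add: amp_apply X_def)
  show ?thesis unfolding psd_def psd_on_qf
  proof
    fix u :: "'b \<Rightarrow> complex"
    have "qf UNIV (\<Phi> \<rho>) u = qf ({..<1} \<times> UNIV) (amp 1 \<Phi> X) (\<lambda>x. u (snd x))"
      unfolding S2 qf_reindex[OF ig2] M by (simp add: o_def)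
    then show "qf UNIV (\<Phi> \<rho>) u \<in> \<real> \<and> 0 \<le> Re (qf UNIV (\<Phi> \<rho>) u)"
      using P unfolding psd_on_qf by metis
  qed
qed

lemma qf_delta:
  assumes "finite S" "p \<in> S"
  shows "qf S M (\<lambda>x. if x = p then 1 else 0) = M p p"
proof -
  have "qf S M (\<lambda>x. if x = p then 1 else 0) = (\<Sum>x\<in>S. if x = p then (\<Sum>y\<in>S. if y = p then M x y else 0) else 0)"
    unfolding qf_def by (auto intro!: sum.cong)
  also have "\<dots> = M p p" using assms by simp
  finally show ?thesis .
qed

lemma psd_trace_nonneg:
  assumes "psd (M :: ('a::finite) cmat)"
  shows "Re (mtrace M) \<ge> 0"
proof -
  have "Re (M a a) \<ge> 0" for a
    using assms qf_delta[of UNIV a M] unfolding psd_def psd_on_qf by (metis finite_class.finite_UNIV UNIV_I)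
  then show ?thesis unfolding mtrace_def Re_sum by (simp add: sum_nonneg)
qed


lemma sum_UNIV_prod: "(\<Sum>x\<in>(UNIV :: ('c::finite \<times> 'b::finite) set). f x) = (\<Sum>i\<in>UNIV. \<Sum>b\<in>UNIV. f (i, b))"
  by (simp add: sum.cartesian_product UNIV_Times_UNIV[symmetric] del: UNIV_Times_UNIV)

lemma mtrace_sum_maps: "mtrace (sum_maps G \<rho>) = (\<Sum>i\<in>UNIV. mtrace (G i \<rho>))"
  unfolding mtrace_def sum_maps_def by (rule sum.swap)

lemma mtrace_instr: "mtrace (instr_channel G \<rho>) = mtrace (sum_maps G \<rho>)"
  unfolding mtrace_sum_maps unfolding mtrace_def instr_channel_def sum_UNIV_prod by simp

lemma mtrace_compress:
  "mtrace (sum_maps (\<lambda>i \<rho> b b'. \<Theta> \<rho> (i, b) (i, b')) \<rho>) = mtrace (\<Theta> \<rho>)"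
  unfolding mtrace_sum_maps unfolding mtrace_def sum_UNIV_prod by simp

lemma instr_channel_sum:
  "instr_channel G = sum_maps (\<lambda>c \<rho> x y. if fst x = c \<and> fst y = c then G c \<rho> (snd x) (snd y) else 0)"
proof -
  have "instr_channel G \<rho> x y = (\<Sum>c\<in>UNIV. if fst x = c \<and> fst y = c then G c \<rho> (snd x) (snd y) else 0)"
    for \<rho> x y
  proof (cases "fst x = fst y")
    case True
    then show ?thesis by (cases x; cases y) (simp add: instr_channel_def)
  next
    case False
    then show ?thesis by (cases x; cases y) (auto simp: instr_channel_def intro!: sum.neutral)
  qed
  then show ?thesis unfolding sum_maps_def by (simp add: fun_eq_iff)
qed

lemma mtrace_mix:
  assumes "s \<ge> 0"
  shows "mtrace (mix s A B \<rho>) = (mtrace (A \<rho>) + complex_of_real s * mtrace (B \<rho>)) / complex_of_real (1 + s)"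
  unfolding mtrace_def mix_def
  by (simp add: sum_divide_distrib[symmetric] sum.distrib sum_distrib_left)

lemma channel_mix:
  assumes "channel A" "channel B" "s \<ge> 0"
  shows "channel (mix s A B)"
proof -
  have ne: "complex_of_real (1 + s) \<noteq> 0" by (simp only: of_real_eq_0_iff) (use assms(3) in linarith)
  have cp: "completely_positive (mix s A B)"
    using assms cp_mix unfolding channel_def by blast
  have "mtrace (mix s A B \<rho>) = mtrace \<rho>" for \<rho>
  proof -
    have "mtrace (mix s A B \<rho>) = (mtrace \<rho> + complex_of_real s * mtrace \<rho>) / complex_of_real (1 + s)"
      using assms unfolding mtrace_mix[OF assms(3)] channel_def by simp
    also have "\<dots> = mtrace \<rho> * complex_of_real (1 + s) / complex_of_real (1 + s)"
      by (simp add: algebra_simps)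
    also have "\<dots> = mtrace \<rho>" using ne by simp
    finally show ?thesis .
  qed
  then show ?thesis using cp unfolding channel_def by simp
qed

lemma sum_maps_mix:
  "sum_maps (\<lambda>i. mix s (E i) (G i)) = mix s (sum_maps E) (sum_maps G)"
  unfolding sum_maps_def mix_def
  by (simp add: fun_eq_iff sum_divide_distrib[symmetric] sum.distrib sum_distrib_left)

lemma channel_instr:
  assumes "instrument G"
  shows "channel (instr_channel G)"
proof -
  have "completely_positive (G c)" for c using assms unfolding instrument_def cptn_def by auto
  then have "completely_positive (instr_channel G)"
    unfolding instr_channel_sum by (intro cp_sum_maps cp_block)
  moreover have "mtrace (instr_channel G \<rho>) = mtrace \<rho>" for \<rho>
    using assms unfolding mtrace_instr instrument_def channel_def by simp
  ultimately show ?thesis unfolding channel_def by simp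
qed

lemma instrument_compress:
  assumes "channel (\<Theta> :: ('a::finite) cmat \<Rightarrow> (('c::finite) \<times> ('b::finite)) cmat)"
  shows "instrument (\<lambda>i \<rho> b b'. \<Theta> \<rho> (i, b) (i, b'))" (is "instrument ?G")
proof -
  have cpT: "completely_positive \<Theta>" using assms unfolding channel_def by simp
  have cp: "completely_positive (?G i)" for i
    using cp_compress[OF cpT, of "Pair i"] by (simp add: inj_on_def)
  have tr: "mtrace (sum_maps ?G \<rho>) = mtrace \<rho>" for \<rho>
    using assms unfolding mtrace_compress channel_def by simp
  have "cptn (?G i)" for i
    unfolding cptn_def
  proof (intro conjI cp allI impI)
    fix \<rho> :: "'a cmat" assume p: "psd \<rho>"
    have nn: "Re (mtrace (?G j \<rho>)) \<ge> 0" for j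
      by (rule psd_trace_nonneg, rule cp_psd[OF cp p])
    have "Re (mtrace (?G i \<rho>)) \<le> (\<Sum>j\<in>UNIV. Re (mtrace (?G j \<rho>)))"
      by (rule member_le_sum) (use nn in auto)
    also have "\<dots> = Re (mtrace \<rho>)"
      using tr[of \<rho>] unfolding mtrace_sum_maps by (simp add: Re_sum[symmetric])
    finally show "Re (mtrace (?G i \<rho>)) \<le> Re (mtrace \<rho>)" .
  qed
  moreover have "channel (sum_maps ?G)"
    using tr cp_sum_maps[OF cp] unfolding channel_def by simp
  ultimately show ?thesis unfolding instrument_def by simp
qed

theorem theorem16:
  fixes F :: "(('a::finite) cmat \<Rightarrow> ('b::finite) cmat) set"
    and E :: "'c::finite \<Rightarrow> 'a cmat \<Rightarrow> 'b cmat"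
  assumes "F \<subseteq> {\<Phi>. cptn \<Phi>}"
    and "instrument E"
  shows "rob_instr F E =
         rob_chan (free_instr_channels F :: ('a cmat \<Rightarrow> ('c \<times> 'b) cmat) set) (instr_channel E)"
proof -
  have chE: "channel (sum_maps E)" using assms(2) unfolding instrument_def by simp
  have "{s. s \<ge> 0 \<and> (\<exists>G :: 'c \<Rightarrow> 'a cmat \<Rightarrow> 'b cmat. instrument G \<and> (\<forall>i. mix s (E i) (G i) \<in> F))}
      = {s. s \<ge> 0 \<and> (\<exists>\<Theta> :: 'a cmat \<Rightarrow> ('c \<times> 'b) cmat. channel \<Theta> \<and>
            mix s (instr_channel E) \<Theta> \<in> free_instr_channels F)}" (is "?A = ?B")
  proof (intro set_eqI iffI)
    fix s assume "s \<in> ?A"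
    then obtain G where s: "s \<ge> 0" and G: "instrument G" and GF: "\<forall>i. mix s (E i) (G i) \<in> F" by auto
    have chG: "channel (sum_maps G)" using G unfolding instrument_def by simp
    have eq: "mix s (instr_channel E) (instr_channel G) = instr_channel (\<lambda>i. mix s (E i) (G i))"
      by (auto simp: fun_eq_iff mix_def instr_channel_def)
    have "channel (sum_maps (\<lambda>i. mix s (E i) (G i)))"
      unfolding sum_maps_mix by (rule channel_mix[OF chE chG s])
    then have "mix s (instr_channel E) (instr_channel G) \<in> free_instr_channels F"
      unfolding eq free_instr_channels_def using GF by blast
    then show "s \<in> ?B" using s channel_instr[OF G] by blast
  next
    fix s assume "s \<in> ?B"
    then obtain \<Theta> :: "'a cmat \<Rightarrow> ('c \<times> 'b) cmat" where s: "s \<ge> 0" and T: "channel \<Theta>"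
      and TF: "mix s (instr_channel E) \<Theta> \<in> free_instr_channels F" by auto
    then obtain E' where E'F: "\<forall>i. E' i \<in> F" and eq: "mix s (instr_channel E) \<Theta> = instr_channel E'"
      unfolding free_instr_channels_def by auto
    define G where "G = (\<lambda>i \<rho> b b'. \<Theta> \<rho> (i, b) (i, b'))"
    have G: "instrument G" unfolding G_def by (rule instrument_compress[OF T])
    have "mix s (E i) (G i) = E' i" for i
    proof -
      have "mix s (E i) (G i) \<rho> b b' = E' i \<rho> b b'" for \<rho> b b'
        using fun_cong[OF fun_cong[OF fun_cong[OF eq, of \<rho>], of "(i, b)"], of "(i, b')"]
        by (simp add: mix_def instr_channel_def G_def)
      then show ?thesis by (simp add: fun_eq_iff)
    qed
    then show "s \<in> ?A" using s G E'F by auto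
  qed
  then show ?thesis unfolding rob_instr_def rob_chan_def by simp
qed

end
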